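(* Let $G=(V,E)$ be a finite simple graph with $V=\{x_1,\dots,x_r\}$, $E=\{e_1,\dots,e_n\}$, and suppose $(x_1,x_2,x_3)$ is a simple path of $G$ with edges $e_1=\{x_1,x_2\}$, $e_2=\{x_2,x_3\}$. Let $s=w_1x_1+w_2x_2+\cdots+w_rx_r\in\operatorname{Im}(\varphi_G)$ with $w_1<w_2$. Then the simplicial complex $\Delta^G_s$ is acyclic (all its reduced homology groups with coefficients in $\mathbb{K}$ vanish).
   Context: $\mathbb{N}[V]$ and $\mathbb{N}[E]$ denote the free commutative monoids on $V$ and on $E$, and $\varphi_G:\mathbb{N}[E]\to\mathbb{N}[V]$ is the monoid homomorphism with $\varphi_G(e_j)=x_{j_1}+x_{j_2}$ for $e_j=\{x_{j_1},x_{j_2}\}$. For $F\subseteq[n]$ put $e_F=\sum_{i\in F}e_i$, and for $s\in\mathbb{N}[V]$ let $\Delta^G_s=\{F\subseteq[n]: s-\varphi_G(e_F)\in\operatorname{Im}(\varphi_G)\}$ (here $s-\varphi_G(e_F)$ is computed in $\mathbb{Z}^V$), a simplicial complex on $[n]$. A path is a walk $(y_0,\dots,y_m)$ (consecutive vertices adjacent) whose interior vertices $y_1,\dots,y_{m-1}$ have degree exactly $2$ in $G$; a path is simple if the common neighbours of its first and last vertices all lie on the path. *)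

theory Defs
  imports Main
begin

text \<open>A finite simple graph with vertex set V = {1..r} (vertex x_i is the number i)
and edge list e_1, ..., e_n (edge e_j is the 2-element set e j), all edges distinct.\<close>

definition simple_graph :: "nat \<Rightarrow> nat \<Rightarrow> (nat \<Rightarrow> nat set) \<Rightarrow> bool" where
  "simple_graph r n e \<longleftrightarrow>
     (\<forall>j\<in>{1..n}. e j \<subseteq> {1..r} \<and> card (e j) = 2) \<and> inj_on e {1..n}"

definition adj :: "nat \<Rightarrow> (nat \<Rightarrow> nat set) \<Rightarrow> nat \<Rightarrow> nat \<Rightarrow> bool" where
  "adj n e u v \<longleftrightarrow> (\<exists>j\<in>{1..n}. e j = {u, v})"

definition degree :: "nat \<Rightarrow> (nat \<Rightarrow> nat set) \<Rightarrow> nat \<Rightarrow> nat" where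
  "degree n e v = card {j\<in>{1..n}. v \<in> e j}"

definition is_path :: "nat \<Rightarrow> (nat \<Rightarrow> nat set) \<Rightarrow> nat list \<Rightarrow> bool" where
  "is_path n e ys \<longleftrightarrow> ys \<noteq> [] \<and>
     (\<forall>i. Suc i < length ys \<longrightarrow> adj n e (ys ! i) (ys ! Suc i)) \<and>
     (\<forall>i. 0 < i \<and> Suc i < length ys \<longrightarrow> degree n e (ys ! i) = 2)"

definition is_simple_path :: "nat \<Rightarrow> nat \<Rightarrow> (nat \<Rightarrow> nat set) \<Rightarrow> nat list \<Rightarrow> bool" where
  "is_simple_path r n e ys \<longleftrightarrow> is_path n e ys \<and>
     (\<forall>y\<in>{1..r}. adj n e (hd ys) y \<and> adj n e (last ys) y \<longrightarrow> y \<in> set ys)"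

text \<open>Membership of an integer vector t \<in> \<int>^V in Im(phi_G): t = phi_G(sum_j a_j e_j), a_j \<in> \<nat>.\<close>
definition in_Im_phi :: "nat \<Rightarrow> nat \<Rightarrow> (nat \<Rightarrow> nat set) \<Rightarrow> (nat \<Rightarrow> int) \<Rightarrow> bool" where
  "in_Im_phi r n e t \<longleftrightarrow> (\<exists>a :: nat \<Rightarrow> nat.
      \<forall>x\<in>{1..r}. t x = (\<Sum>j\<in>{1..n}. int (a j) * (if x \<in> e j then 1 else 0)))"

definition phi_eF :: "nat \<Rightarrow> (nat \<Rightarrow> nat set) \<Rightarrow> nat set \<Rightarrow> nat \<Rightarrow> int" where
  "phi_eF n e F x = (\<Sum>j\<in>F. if x \<in> e j then 1 else 0)"

definition Delta :: "nat \<Rightarrow> nat \<Rightarrow> (nat \<Rightarrow> nat set) \<Rightarrow> (nat \<Rightarrow> int) \<Rightarrow> nat set set" where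
  "Delta r n e s = {F. F \<subseteq> {1..n} \<and> in_Im_phi r n e (\<lambda>x. s x - phi_eF n e F x)}"

text \<open>Simplicial boundary with coefficients in a field: a chain is a function from faces to 'k.
 Faces of dimension d are the members of D of cardinality d+1 (the empty face has dimension -1,
 giving the augmented / reduced chain complex).\<close>
definition bd :: "nat set set \<Rightarrow> nat set \<Rightarrow> (nat set \<Rightarrow> 'k::field) \<Rightarrow> nat set \<Rightarrow> 'k" where
  "bd D U c F = (\<Sum>i\<in>U - F. if insert i F \<in> D
      then (-1) ^ card {j\<in>F. j < i} * c (insert i F) else 0)"

definition chain_on :: "nat set set \<Rightarrow> nat \<Rightarrow> (nat set \<Rightarrow> 'k::field) \<Rightarrow> bool" where
  "chain_on D m c \<longleftrightarrow> (\<forall>F. c F \<noteq> 0 \<longrightarrow> F \<in> D \<and> card F = m)"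

definition acyclic_over :: "'k::field itself \<Rightarrow> nat set \<Rightarrow> nat set set \<Rightarrow> bool" where
  "acyclic_over _ U D \<longleftrightarrow>
    (\<forall>m (c :: nat set \<Rightarrow> 'k). chain_on D m c \<and>
        (m > 0 \<longrightarrow> (\<forall>F. card F = m - 1 \<longrightarrow> bd D U c F = 0)) \<longrightarrow>
        (\<exists>d :: nat set \<Rightarrow> 'k. chain_on D (Suc m) d \<and> (\<forall>F. card F = m \<longrightarrow> bd D U d F = c F)))"

end

theory Submission imports Defs begin


definition sg :: "nat set \<Rightarrow> nat \<Rightarrow> 'k::field" where
  "sg F i = (-1) ^ card {j\<in>F. j < i}"

lemma sg_sq: "sg F i * sg F i = (1::'k::field)"
  by (simp add: sg_def power_mult_distrib[symmetric] flip: power_add)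

lemma sg_bd: "bd D U c F = (\<Sum>i\<in>U - F. if insert i F \<in> D then sg F i * c (insert i F) else 0)"
  unfolding bd_def sg_def by simp

lemma card_lt_insert:
  assumes "finite H" "v \<notin> H"
  shows "card {j\<in>insert v H. j < i} = card {j\<in>H. j < i} + (if v < i then 1 else 0)"
proof -
  have "{j\<in>insert v H. j < i} = (if v < i then insert v {j\<in>H. j < i} else {j\<in>H. j < i})" by auto
  then show ?thesis using assms by auto
qed

lemma sign_id:
  assumes "finite H" "v \<notin> H" "i \<notin> H" "i \<noteq> v"
  shows "sg (insert v H) i * sg (insert i H) v = - (sg H v * sg H i :: 'k::field)"
proof -
  have "sg (insert v H) i * sg (insert i H) v
     = ((-1::'k) ^ (card {j\<in>H. j < i} + card {j\<in>H. j < v} + 1))"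
    using assms card_lt_insert[OF assms(1,2), of i] card_lt_insert[OF assms(1,3), of v]
    unfolding sg_def by (cases "v < i") (auto simp: power_add)
  then show ?thesis by (simp add: sg_def power_add mult.commute)
qed

lemma cone_acyclic:
  assumes U: "finite U" and vU: "v \<in> U" and DU: "D \<subseteq> Pow U"
    and cone: "\<And>F. F \<in> D \<Longrightarrow> insert v F \<in> D"
  shows "acyclic_over TYPE('k::field) U D"
  unfolding acyclic_over_def
proof (intro allI impI, elim conjE)
  fix m and c :: "nat set \<Rightarrow> 'k"
  assume ch: "chain_on D m c" and cyc: "0 < m \<longrightarrow> (\<forall>F. card F = m - 1 \<longrightarrow> bd D U c F = 0)"
  have cD: "c X \<noteq> 0 \<Longrightarrow> X \<in> D" for X using ch by (auto simp: chain_on_def)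
  have cif: "(if X \<in> D then a * c X else 0) = a * c X" for X a using cD by auto
  have fin: "X \<in> D \<Longrightarrow> finite X" for X using DU U finite_subset by blast
  define d where "d G = (if v \<in> G \<and> G \<in> D then sg (G - {v}) v * c (G - {v}) else 0)" for G
  have chd: "chain_on D (Suc m) d"
    unfolding chain_on_def
  proof (intro allI impI)
    fix G assume "d G \<noteq> 0"
    then have G: "v \<in> G" "G \<in> D" "c (G - {v}) \<noteq> 0" by (auto simp: d_def split: if_splits)
    then have "card (G - {v}) = m" using ch by (auto simp: chain_on_def)
    moreover have "finite G" using fin G by auto
    ultimately show "G \<in> D \<and> card G = Suc m" using G
      by (metis card_Diff1_less card.remove Suc_pred card_gt_0_iff empty_iff)
  qed
  have "bd D U d F = c F" if cF: "card F = m" for F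
  proof (cases "v \<in> F")
    case False
    have "bd D U d F = (\<Sum>i\<in>U - F. if insert i F \<in> D then sg F i * d (insert i F) else 0)"
      by (rule sg_bd)
    also have "\<dots> = (if insert v F \<in> D then sg F v * d (insert v F) else 0)
        + (\<Sum>i\<in>U - F - {v}. if insert i F \<in> D then sg F i * d (insert i F) else 0)"
      using U vU False by (subst sum.remove[of _ v]) auto
    also have "(\<Sum>i\<in>U - F - {v}. if insert i F \<in> D then sg F i * d (insert i F) else 0) = 0"
      using False by (intro sum.neutral) (auto simp: d_def)
    also have "(if insert v F \<in> D then sg F v * d (insert v F) else 0) = c F"
    proof -
      have "insert v F - {v} = F" using False by auto
      then have "(if insert v F \<in> D then sg F v * d (insert v F) else 0)
          = (if insert v F \<in> D then sg F v * sg F v * c F else 0)" by (simp add: d_def)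
      also have "\<dots> = c F" using sg_sq cD cone by (cases "c F = 0") auto
      finally show ?thesis .
    qed
    finally show ?thesis by simp
  next
    case True
    show ?thesis
    proof (cases "finite F")
      case False
      then have "F \<notin> D" using fin by auto
      then have "c F = 0" using cD by auto
      moreover have "insert i F \<notin> D" for i using False fin by (metis finite_insert)
      ultimately show ?thesis by (simp add: sg_bd)
    next
      case finF: True
      define H where "H = F - {v}"
      have FH: "F = insert v H" "v \<notin> H" "finite H" using True finF by (auto simp: H_def)
      have mpos: "0 < m" using cF finF True card_gt_0_iff by blast
      have "card H = m - 1" using cF FH by simp
      then have "bd D U c H = 0" using cyc mpos by auto
      moreover have "U - H = insert v (U - F)" using vU FH by auto
      ultimately have "0 = (\<Sum>i\<in>insert v (U - F). sg H i * c (insert i H))"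
        by (simp add: sg_bd cif)
      also have "\<dots> = sg H v * c F + (\<Sum>i\<in>U - F. sg H i * c (insert i H))"
        using U True FH by (subst sum.insert) auto
      finally have eq: "(\<Sum>i\<in>U - F. sg H i * c (insert i H)) = - (sg H v * c F)"
        by (simp add: eq_neg_iff_add_eq_0 add.commute)
      have "bd D U d F = (\<Sum>i\<in>U - F. if insert i F \<in> D then sg F i * d (insert i F) else 0)"
        by (rule sg_bd)
      also have "\<dots> = (\<Sum>i\<in>U - F. - sg H v * (sg H i * c (insert i H)))"
      proof (rule sum.cong[OF refl])
        fix i assume i: "i \<in> U - F"
        then have iv: "i \<noteq> v" "i \<notin> H" using True FH by auto
        have e1: "insert i F - {v} = insert i H" using FH iv by auto
        have e2: "insert i F = insert v (insert i H)" using FH by auto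
        show "(if insert i F \<in> D then sg F i * d (insert i F) else 0)
            = - sg H v * (sg H i * c (insert i H))"
        proof (cases "c (insert i H) = 0")
          case True then show ?thesis by (simp add: d_def e1)
        next
          case False
          then have "insert i F \<in> D" using cD cone e2 by metis
          then have "d (insert i F) = sg (insert i H) v * c (insert i H)"
            using True by (simp add: d_def e1)
          then show ?thesis using sign_id[OF FH(3) FH(2) iv(2) iv(1), where 'k='k] FH(1)
            \<open>insert i F \<in> D\<close> by (simp add: mult.assoc[symmetric])
        qed
      qed
      also have "\<dots> = - sg H v * (- (sg H v * c F))"
        by (simp only: sum_distrib_left[symmetric] eq)
      also have "\<dots> = c F" using sg_sq[of H v, where 'k='k] by (simp add: mult.assoc[symmetric])
      finally show ?thesis .
    qed
  qed
  then show "\<exists>d. chain_on D (Suc m) d \<and> (\<forall>F. card F = m \<longrightarrow> bd D U d F = c F)"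
    using chd by blast
qed

theorem lemma3p6:
  fixes r n :: nat and e :: "nat \<Rightarrow> nat set" and w :: "nat \<Rightarrow> nat"
  assumes "simple_graph r n e"
    and "2 \<le> n"
    and "is_simple_path r n e [1, 2, 3]"
    and "e 1 = {1, 2}" and "e 2 = {2, 3}"
    and "in_Im_phi r n e (\<lambda>x. int (w x))"
    and "w 1 < w 2"
  shows "acyclic_over TYPE('k::field) {1..n} (Delta r n e (\<lambda>x. int (w x)))"
proof (rule cone_acyclic)
  show "finite {1..n}" by simp
  show "2 \<in> {1..n}" using assms(2) by simp
  show "Delta r n e (\<lambda>x. int (w x)) \<subseteq> Pow {1..n}" by (auto simp: Delta_def)
  have r1: "1 \<in> {1..r}" "2 \<in> {1..r}"
  proof -
    have "e 1 \<subseteq> {1..r}" using assms(1,2) unfolding simple_graph_def by auto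
    then show "1 \<in> {1..r}" "2 \<in> {1..r}" using assms(4) by auto
  qed
  have deg: "degree n e 2 = 2" using assms(3) unfolding is_simple_path_def is_path_def
    by (metis One_nat_def Suc_1 length_Cons list.size(3) nth_Cons_0 nth_Cons_Suc
        lessI numeral_3_eq_3 zero_less_one)
  have E2: "{j\<in>{1..n}. 2 \<in> e j} = {1, 2}"
  proof -
    have sub: "{1, 2} \<subseteq> {j\<in>{1..n}. 2 \<in> e j}" using assms(2,4,5) by auto
    have "card {j\<in>{1..n}. 2 \<in> e j} = card {1::nat, 2}" using deg by (simp add: degree_def)
    then show ?thesis using sub by (intro card_subset_eq[symmetric]) auto
  qed
  fix F assume FD: "F \<in> Delta r n e (\<lambda>x. int (w x))"
  then have Fs: "F \<subseteq> {1..n}" and "in_Im_phi r n e (\<lambda>x. int (w x) - phi_eF n e F x)"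
    by (auto simp: Delta_def)
  then obtain a where a: "\<And>x. x \<in> {1..r} \<Longrightarrow>
      int (w x) - phi_eF n e F x = (\<Sum>j\<in>{1..n}. int (a j) * (if x \<in> e j then 1 else 0))"
    unfolding in_Im_phi_def by blast
  show "insert 2 F \<in> Delta r n e (\<lambda>x. int (w x))"
  proof (cases "2 \<in> F")
    case True then show ?thesis using FD by (simp add: insert_absorb)
  next
    case False
    have finF: "finite F" using Fs finite_subset by blast
    define b where "b = (if 1 \<in> F then 1 else 0 :: int)"
    have p1: "phi_eF n e F 1 \<ge> b"
    proof (cases "1 \<in> F")
      case True
      have "(if (1::nat) \<in> e 1 then 1 else 0 :: int) \<le> phi_eF n e F 1"
        unfolding phi_eF_def by (rule member_le_sum[OF True _ finF]) auto
      then show ?thesis using True assms(4) by (simp add: b_def)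
    next
      case False then show ?thesis by (simp add: b_def phi_eF_def sum_nonneg)
    qed
    have "int (a 1) * (if (1::nat) \<in> e 1 then 1 else 0) \<le>
        (\<Sum>j\<in>{1..n}. int (a j) * (if (1::nat) \<in> e j then 1 else 0))"
      by (rule member_le_sum) (use assms(2) in auto)
    then have a1: "int (a 1) \<le> int (w 1) - phi_eF n e F 1" using a[OF r1(1)] assms(4) by simp
    have "(\<Sum>j\<in>{1..n}. int (a j) * (if (2::nat) \<in> e j then 1 else 0))
        = (\<Sum>j\<in>{j\<in>{1..n}. 2 \<in> e j}. int (a j))"
      by (simp add: sum.inter_filter[symmetric] if_distrib cong: if_cong)
    also have "\<dots> = int (a 1) + int (a 2)" unfolding E2 by simp
    finally have s2: "(\<Sum>j\<in>{1..n}. int (a j) * (if (2::nat) \<in> e j then 1 else 0)) = int (a 1) + int (a 2)" .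
    have "phi_eF n e F 2 = (\<Sum>j\<in>{j\<in>F. 2 \<in> e j}. 1)"
      unfolding phi_eF_def by (simp add: sum.inter_filter[symmetric] finF)
    also have "{j\<in>F. 2 \<in> e j} = F \<inter> {1}"
    proof -
      have "j \<in> {1, 2}" if "j \<in> F" "2 \<in> e j" for j
        using that Fs unfolding E2[symmetric] by auto
      then show ?thesis using False assms(4) by auto
    qed
    finally have p2: "phi_eF n e F 2 = b" by (auto simp: b_def)
    have w2: "int (w 2) - b = int (a 1) + int (a 2)" using a[OF r1(2)] s2 p2 by simp
    have a2: "a 2 \<ge> 1" using w2 a1 p1 assms(7) by linarith
    define a' where "a' = a(2 := a 2 - 1)"
    show ?thesis unfolding Delta_def in_Im_phi_def
    proof (intro CollectI conjI exI[of _ a'] ballI)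
      show "insert 2 F \<subseteq> {1..n}" using Fs assms(2) by auto
      fix x assume x: "x \<in> {1..r}"
      have ph: "phi_eF n e (insert 2 F) x = phi_eF n e F x + (if x \<in> e 2 then 1 else 0)"
        unfolding phi_eF_def using finF False by simp
      have "(\<Sum>j\<in>{1..n}. int (a' j) * (if x \<in> e j then 1 else 0))
          = (\<Sum>j\<in>{1..n}. int (a j) * (if x \<in> e j then 1 else 0)) - (if x \<in> e 2 then 1 else 0)"
      proof -
        have "(\<Sum>j\<in>{1..n}. int (a j) * (if x \<in> e j then 1 else 0))
            = int (a 2) * (if x \<in> e 2 then 1 else 0) + (\<Sum>j\<in>{1..n} - {2}. int (a j) * (if x \<in> e j then 1 else 0))"
          using assms(2) by (subst sum.remove[of _ 2]) auto
        moreover have "(\<Sum>j\<in>{1..n}. int (a' j) * (if x \<in> e j then 1 else 0))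
            = int (a' 2) * (if x \<in> e 2 then 1 else 0) + (\<Sum>j\<in>{1..n} - {2}. int (a' j) * (if x \<in> e j then 1 else 0))"
          using assms(2) by (subst sum.remove[of _ 2]) auto
        moreover have "(\<Sum>j\<in>{1..n} - {2}. int (a' j) * (if x \<in> e j then 1 else 0))
            = (\<Sum>j\<in>{1..n} - {2}. int (a j) * (if x \<in> e j then 1 else 0))"
          by (rule sum.cong) (auto simp: a'_def)
        ultimately show ?thesis using a2 by (simp add: a'_def of_nat_diff)
      qed
      then show "int (w x) - phi_eF n e (insert 2 F) x
          = (\<Sum>j\<in>{1..n}. int (a' j) * (if x \<in> e j then 1 else 0))"
        using a[OF x] ph by simp
    qed
  qed
qed

end
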